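(* Let $T>0$, $H_1,H_2\in(1/2,1)$ and $\rho\in[-1,1]$. Let $(\tilde W^1,\tilde W^2)$ be a two-dimensional standard Brownian motion, $W^1=\tilde W^1$, $W^2=\rho\tilde W^1+\sqrt{1-\rho^2}\,\tilde W^2$, and for $l=1,2$ let $B^l=(B^l_t)_{t\in[0,T]}$ be (a continuous modification of) the Wiener integral $B^l_t=\int_0^T K_{H_l}(t,s)\,dW^l_s$. Then for all $s,t\in[0,T]$, $$\mathbb E\{B^1_tB^2_s\}=\rho\, c_{H_1}c_{H_2}\int_0^t du\int_0^s dv\ \beta(u,v)\,|u-v|^{H_1+H_2-2}\,u^{H_1-H_2}\,v^{H_2-H_1},$$ where $\beta(u,v)=B(H_1-1/2,\,2-H_1-H_2)$ if $u\le v$ and $\beta(u,v)=B(H_2-1/2,\,2-H_1-H_2)$ if $v<u$.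
   Context: $B(\cdot,\cdot)$ denotes the Beta function. For $H\in(1/2,1)$, $c_H=\sqrt{H(2H-1)/B(2-2H,H-1/2)}$ and $K_H(t,s)=c_H\mathbf 1_{(0,t)}(s)\,s^{1/2-H}\int_s^t(u-s)^{H-3/2}u^{H-1/2}\,du$ for $0\le s,t\le T$. *)

theory Defs
  imports "HOL-Probability.Probability"
begin

definition cH :: "real \<Rightarrow> real" where
  "cH H = sqrt (H * (2 * H - 1) / Beta (2 - 2 * H) (H - 1/2))"

definition KH :: "real \<Rightarrow> real \<Rightarrow> real \<Rightarrow> real" where
  "KH H t s = cH H * indicator {0<..<t} s * s powr (1/2 - H) *
      (LBINT u:{s..t}. (u - s) powr (H - 3/2) * u powr (H - 1/2))"

definition std_BM :: "'a measure \<Rightarrow> (real \<Rightarrow> 'a \<Rightarrow> real) \<Rightarrow> bool" where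
  "std_BM M W \<longleftrightarrow>
     (\<forall>t. W t \<in> borel_measurable M) \<and>
     (\<forall>\<omega>\<in>space M. W 0 \<omega> = 0) \<and>
     (\<forall>\<omega>\<in>space M. continuous_on {0..} (\<lambda>t. W t \<omega>)) \<and>
     (\<forall>s t. 0 \<le> s \<and> s < t \<longrightarrow>
        distributed M lborel (\<lambda>\<omega>. W t \<omega> - W s \<omega>) (normal_density 0 (sqrt (t - s)))) \<and>
     (\<forall>(n::nat) (tt::nat \<Rightarrow> real). 0 \<le> tt 0 \<and> (\<forall>i<n. tt i < tt (Suc i)) \<longrightarrow>
        prob_space.indep_vars M (\<lambda>_. borel) (\<lambda>i \<omega>. W (tt (Suc i)) \<omega> - W (tt i) \<omega>) {..<n})"

definition step_fun :: "nat \<Rightarrow> (nat \<Rightarrow> real) \<Rightarrow> (nat \<Rightarrow> real) \<Rightarrow> (nat \<Rightarrow> real) \<Rightarrow> real \<Rightarrow> real" where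
  "step_fun n c a b r = (\<Sum>i<n. c i * indicator {a i<..b i} r)"

definition step_int :: "(real \<Rightarrow> 'a \<Rightarrow> real) \<Rightarrow> nat \<Rightarrow> (nat \<Rightarrow> real) \<Rightarrow> (nat \<Rightarrow> real) \<Rightarrow> (nat \<Rightarrow> real) \<Rightarrow> 'a \<Rightarrow> real" where
  "step_int W n c a b \<omega> = (\<Sum>i<n. c i * (W (b i) \<omega> - W (a i) \<omega>))"

definition wiener_integral ::
  "'a measure \<Rightarrow> (real \<Rightarrow> 'a \<Rightarrow> real) \<Rightarrow> real \<Rightarrow> (real \<Rightarrow> real) \<Rightarrow> ('a \<Rightarrow> real) \<Rightarrow> bool" where
  "wiener_integral M W T f I \<longleftrightarrow>
     I \<in> borel_measurable M \<and>
     (\<exists>(n::nat \<Rightarrow> nat) (c::nat \<Rightarrow> nat \<Rightarrow> real) a b.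
        (\<forall>k i. 0 \<le> a k i \<and> a k i \<le> b k i \<and> b k i \<le> T) \<and>
        ((\<lambda>k. \<integral>\<^sup>+ r\<in>{0..T}. ennreal ((f r - step_fun (n k) (c k) (a k) (b k) r)\<^sup>2) \<partial>lborel)
            \<longlonglongrightarrow> 0) \<and>
        ((\<lambda>k. \<integral>\<^sup>+ \<omega>. ennreal ((I \<omega> - step_int W (n k) (c k) (a k) (b k) \<omega>)\<^sup>2) \<partial>M)
            \<longlonglongrightarrow> 0))"

definition beta_fn :: "real \<Rightarrow> real \<Rightarrow> real \<Rightarrow> real \<Rightarrow> real" where
  "beta_fn H1 H2 u v = (if u \<le> v then Beta (H1 - 1/2) (2 - H1 - H2) else Beta (H2 - 1/2) (2 - H1 - H2))"

end

theory Submission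
  imports Defs
begin


lemma beta_subst_pointwise:
  fixes a b u v x :: real
  assumes a: "a > 0" and b: "b > 0" and uv: "0 < u" "u < v" and x: "0 < x" "x < 1"
  and D_def: "D = v - u + x * u"
  shows "(x * u * v/D) powr (a-1) * (u - x * u * v/D) powr (b-1) * (v - x * u * v/D) powr (-(a+b))
          * (u * v * (v-u)/D^2)
        = (u powr (a+b-1) * v powr (-b) * (v-u) powr (-a)) * (x powr (a-1) * (1-x) powr (b-1))"
proof -
  have D: "D > 0" unfolding D_def using uv x by (smt (verit) mult_pos_pos)
  have e1: "u - x * u * v/D = u * (v-u) * (1-x)/D" using D unfolding D_def by (simp add: field_simps; simp add: algebra_simps)
  have e2: "v - x * u * v/D = v * (v-u)/D" using D unfolding D_def by (simp add: field_simps; simp add: algebra_simps)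
  have p: "v - u > 0" "1 - x > 0" using uv x by auto
  have "(x * u * v/D) powr (a-1) = exp ((a-1) * (ln x + ln u + ln v - ln D))"
    using D p uv x by (simp add: powr_def ln_mult ln_div)
  moreover have "(u * (v-u) * (1-x)/D) powr (b-1) = exp ((b-1) * (ln u + ln (v-u) + ln (1-x) - ln D))"
    using D p uv x by (simp add: powr_def ln_mult ln_div)
  moreover have "(v * (v-u)/D) powr (-(a+b)) = exp ((-(a+b)) * (ln v + ln (v-u) - ln D))"
    using D p uv x by (simp add: powr_def ln_mult ln_div)
  moreover have "u * v * (v-u)/D^2 = exp (ln u + ln v + ln (v-u) - 2 * ln D)"
    proof -
    have "D powr 2 = exp (2 * ln D)" unfolding powr_def using D by simp
    hence "D^2 = exp (2 * ln D)" using D by (simp add: powr_numeral)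
    then show ?thesis using D p uv x by (simp add: exp_diff exp_add)
  qed
  moreover have "u powr (a+b-1) * v powr (-b) * (v-u) powr (-a) * (x powr (a-1) * (1-x) powr (b-1))
     = exp ((a+b-1) * ln u + (-b) * ln v + (-a) * ln (v-u) + (a-1) * ln x + (b-1) * ln (1-x))"
    using D p uv x by (simp add: powr_def exp_add exp_diff exp_minus field_simps)
  ultimately show ?thesis unfolding e1 e2
    by (simp only: exp_add[symmetric]) (simp add: algebra_simps)
qed

lemma beta_integral:
  fixes a b u v :: real
  assumes a: "a > 0" and b: "b > 0" and uv: "0 < u" "u < v"
  shows "(\<integral>\<^sup>+ r. ennreal (r powr (a-1) * (u-r) powr (b-1) * (v-r) powr (-(a+b)) * indicator {0<..<u} r) \<partial>lborel)
       = ennreal (Beta a b * (u powr (a+b-1) * v powr (-b) * (v-u) powr (-a)))"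
proof -
  define f where "f r = r powr (a-1) * (u-r) powr (b-1) * (v-r) powr (-(a+b))" for r
  define g where "g x = x * u * v / (v - u + x * u)" for x
  define g' where "g' x = u * v * (v-u) / (v - u + x * u)^2" for x
  define C where "C = u powr (a+b-1) * v powr (-b) * (v-u) powr (-a)"
  have Dpos: "v - u + x * u > 0" if "x \<in> {0..1}" for x
    using that uv by (smt (verit) atLeastAtMost_iff mult_nonneg_nonneg)
  have g0: "g 0 = 0" and g1: "g 1 = u" using uv by (auto simp: g_def)
  have "(\<integral>\<^sup>+ r. ennreal (f r * indicator {0<..<u} r) \<partial>lborel)
      = (\<integral>\<^sup>+ r. ennreal (f r * indicator {g 0..g 1} r) \<partial>lborel)"
    unfolding g0 g1
    by (rule nn_integral_cong) (auto simp: f_def indicator_def)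
  also have "\<dots> = (\<integral>\<^sup>+ x. ennreal (f (g x) * g' x * indicator {0..1} x) \<partial>lborel)"
  proof (rule nn_integral_substitution)
    show "set_borel_measurable borel {g 0..g 1} f" unfolding f_def set_borel_measurable_def by measurable
    show "(g has_real_derivative g' x) (at x)" if "x \<in> {0..1}" for x
      using Dpos[OF that] unfolding g_def g'_def
      by (auto intro!: derivative_eq_intros simp: field_simps power2_eq_square)
    show "continuous_on {0..1} g'" unfolding g'_def
      using Dpos by (auto intro!: continuous_intros) (smt (verit) Dpos atLeastAtMost_iff)
    show "0 \<le> g' x" if "x \<in> {0..1}" for x using uv unfolding g'_def by auto
  qed simp
  also have "\<dots> = (\<integral>\<^sup>+ x. ennreal C * ennreal (indicator {0..1} x * (x powr (a-1) * (1-x) powr (b-1))) \<partial>lborel)"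
  proof (rule nn_integral_cong)
    fix x :: real
    show "ennreal (f (g x) * g' x * indicator {0..1} x) = ennreal C * ennreal (indicator {0..1} x * (x powr (a-1) * (1-x) powr (b-1)))"
    proof (cases "x \<in> {0<..<1}")
      case True
      then show ?thesis
        using beta_subst_pointwise[OF a b uv, of x "v - u + x * u"]
        by (simp add: f_def g_def g'_def C_def ennreal_mult'[symmetric] mult_ac)
    next
      case False
      then consider "x = 0" | "x = 1" | "x \<notin> {0..1}" by fastforce
      then show ?thesis
        by cases (use uv in \<open>auto simp: f_def g_def g'_def\<close>)
    qed
  qed
  also have "\<dots> = ennreal C * ennreal (Beta a b)"
    by (subst nn_integral_cmult) (auto simp: nn_integral_has_integral_lebesgue[OF _ has_integral_Beta_real[OF a b]])
  also have "\<dots> = ennreal (Beta a b * C)"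
    using a b by (simp add: ennreal_mult[symmetric] Beta_def Gamma_real_pos C_def mult.commute)
  finally show ?thesis unfolding f_def C_def by (simp add: mult_ac)
qed


lemma inner_beta:
  fixes H1 H2 u v :: real
  assumes H: "1/2 < H1" "H1 < 1" "1/2 < H2" "H2 < 1" and uv: "0 < u" "0 < v" "u \<noteq> v"
  shows "(\<integral>\<^sup>+ r. ennreal (r powr (1-H1-H2) * (u-r) powr (H1-3/2) * (v-r) powr (H2-3/2) * indicator {0<..<min u v} r) \<partial>lborel)
     = ennreal ((if u \<le> v then Beta (H1 - 1/2) (2 - H1 - H2) else Beta (H2 - 1/2) (2 - H1 - H2))
          * \<bar>u - v\<bar> powr (H1+H2-2) * u powr (1/2-H2) * v powr (1/2-H1))"
proof (cases "u < v")
  case True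
  have e: "2-H1-H2-1 = 1-H1-H2" "H1-1/2-1 = H1-3/2" "-(2-H1-H2+(H1-1/2)) = H2-3/2"
     "2-H1-H2+(H1-1/2)-1 = 1/2-H2" "-(H1-1/2) = 1/2-H1" "-(2-H1-H2) = H1+H2-2" by simp_all
  have *: "min u v = u" "\<bar>u - v\<bar> = v - u" "u \<le> v" using True by auto
  show ?thesis
    using beta_integral[of "2-H1-H2" "H1-1/2" u v] H uv True
    unfolding * e by (simp add: Beta_commute mult_ac)
next
  case False
  then have F: "v < u" using uv by auto
  have e: "2-H1-H2-1 = 1-H1-H2" "H2-1/2-1 = H2-3/2" "-(2-H1-H2+(H2-1/2)) = H1-3/2"
     "2-H1-H2+(H2-1/2)-1 = 1/2-H1" "-(H2-1/2) = 1/2-H2" "-(2-H1-H2) = H1+H2-2" by simp_all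
  have *: "min u v = v" "\<bar>u - v\<bar> = u - v" "\<not> u \<le> v" using F by auto
  show ?thesis
    using beta_integral[of "2-H1-H2" "H2-1/2" v u] H uv F
    unfolding * e by (simp add: Beta_commute mult_ac)
qed

lemma powr_shift_integral:
  fixes p r c :: real
  assumes p: "p > -1" and c: "r \<le> c"
  shows "(\<integral>\<^sup>+ u. ennreal ((u-r) powr p * indicator {r..c} u) \<partial>lborel) = ennreal ((c-r) powr (p+1) / (p+1))"
proof -
  have "(\<integral>\<^sup>+ u. ennreal ((u-r) powr p * indicator {r..c} u) \<partial>lborel)
     = (\<integral>\<^sup>+ u. ennreal ((u-r) powr p * indicator {(\<lambda>x. x + r) 0..(\<lambda>x. x + r) (c-r)} u) \<partial>lborel)"
    by simp
  also have "\<dots> = (\<integral>\<^sup>+ x. ennreal (((x + r) - r) powr p * 1 * indicator {0..c-r} x) \<partial>lborel)"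
    by (rule nn_integral_substitution) (use c in \<open>auto intro!: derivative_eq_intros simp: set_borel_measurable_def\<close>)
  also have "\<dots> = (\<integral>\<^sup>+ x. ennreal (indicator {0..c-r} x * x powr p) \<partial>lborel)"
    by (simp add: mult.commute)
  also have "\<dots> = ennreal ((c-r) powr (p+1) / (p+1))"
    by (rule nn_integral_has_integral_lebesgue) (use has_integral_powr_from_0[of p "c-r"] p c in auto)
  finally show ?thesis .
qed

lemma J_finite:
  fixes H r t :: real
  assumes H: "1/2 < H" and r: "0 < r" "r < t"
  shows "(\<integral>\<^sup>+ u. ennreal ((u-r) powr (H-3/2) * u powr (H-1/2) * indicator {r..t} u) \<partial>lborel) < \<infinity>"
proof -
  have "(\<integral>\<^sup>+ u. ennreal ((u-r) powr (H-3/2) * u powr (H-1/2) * indicator {r..t} u) \<partial>lborel)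
     \<le> (\<integral>\<^sup>+ u. ennreal (t powr (H-1/2)) * ennreal ((u-r) powr (H-3/2) * indicator {r..t} u) \<partial>lborel)"
  proof (rule nn_integral_mono)
    fix u :: real
    have "(u-r) powr (H-3/2) * u powr (H-1/2) * indicator {r..t} u \<le> t powr (H-1/2) * ((u-r) powr (H-3/2) * indicator {r..t} u)"
    proof (cases "u \<in> {r..t}")
      case True
      then have "u powr (H-1/2) \<le> t powr (H-1/2)" using H r by (intro powr_mono2) auto
      then have "(u-r) powr (H-3/2) * u powr (H-1/2) \<le> (u-r) powr (H-3/2) * t powr (H-1/2)"
        by (rule mult_left_mono) auto
      then show ?thesis using True by (simp add: mult.commute)
    qed simp
    then show "ennreal ((u-r) powr (H-3/2) * u powr (H-1/2) * indicator {r..t} u) \<le> ennreal (t powr (H-1/2)) * ennreal ((u-r) powr (H-3/2) * indicator {r..t} u)"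
      by (simp add: ennreal_mult'[symmetric] ennreal_leI)
  qed
  also have "\<dots> = ennreal (t powr (H-1/2)) * ennreal ((t-r) powr (H-3/2+1) / (H-3/2+1))"
    using H r by (subst nn_integral_cmult) (auto simp: powr_shift_integral)
  also have "\<dots> < \<infinity>" by (simp add: ennreal_mult'[symmetric])
  finally show ?thesis .
qed


definition NH :: "real \<Rightarrow> real \<Rightarrow> real \<Rightarrow> ennreal" where
  "NH H t r = (\<integral>\<^sup>+ u. ennreal ((u-r) powr (H-3/2) * u powr (H-1/2) * indicator {r<..t} u) \<partial>lborel)"

lemma cH_pos: assumes "1/2 < H" "H < 1" shows "cH H > 0"
proof -
  have "Beta (2 - 2 * H) (H - 1/2) > 0" using assms by (simp add: Beta_def Gamma_real_pos)
  then show ?thesis using assms unfolding cH_def by (simp add: divide_pos_pos)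
qed

lemma KH_repr:
  fixes H t r :: real
  assumes H: "1/2 < H" and H1: "H < 1"
  shows "ennreal (KH H t r) = ennreal (cH H) * ennreal (indicator {0<..<t} r * r powr (1/2-H)) * NH H t r"
    and "KH H t r \<ge> 0"
proof -
  have "KH H t r \<ge> 0 \<and> ennreal (KH H t r) = ennreal (cH H) * ennreal (indicator {0<..<t} r * r powr (1/2-H)) * NH H t r"
  proof (cases "r \<in> {0<..<t}")
    case False
    then show ?thesis by (simp add: KH_def)
  next
    case True
    let ?g = "\<lambda>u. (u-r) powr (H-3/2) * u powr (H-1/2)"
    have eqN: "(\<integral>\<^sup>+ u. ennreal (indicator {r..t} u * ?g u) \<partial>lborel) = NH H t r"
      unfolding NH_def by (rule nn_integral_cong) (auto simp: indicator_def)
    have fin: "NH H t r < \<infinity>"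
      using J_finite[OF H, of r t] True unfolding eqN[symmetric] by (simp add: mult.commute)
    have "(LBINT u:{r..t}. ?g u) = enn2real (\<integral>\<^sup>+ u. ennreal (indicator {r..t} u * ?g u) \<partial>lborel)"
      unfolding set_lebesgue_integral_def by (subst integral_eq_nn_integral) (auto simp: indicator_def)
    then have L: "(LBINT u:{r..t}. ?g u) = enn2real (NH H t r)" using eqN by simp
    have c: "cH H \<ge> 0" using cH_pos[OF H H1] by simp
    have "ennreal (cH H * r powr (1 / 2 - H) * enn2real (NH H t r)) = ennreal (cH H * r powr (1 / 2 - H)) * ennreal (enn2real (NH H t r))"
      using c by (intro ennreal_mult) auto
    also have "\<dots> = ennreal (cH H * r powr (1 / 2 - H)) * NH H t r" using fin by simp
    finally show ?thesis using True fin c unfolding KH_def L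
      by (auto simp: ennreal_mult'[symmetric] ennreal_mult[symmetric])
  qed
  then show "ennreal (KH H t r) = ennreal (cH H) * ennreal (indicator {0<..<t} r * r powr (1/2-H)) * NH H t r"
    and "KH H t r \<ge> 0" by auto
qed


definition Phi :: "real \<Rightarrow> real \<Rightarrow> real \<Rightarrow> real \<Rightarrow> real \<Rightarrow> real \<Rightarrow> real \<Rightarrow> ennreal" where
  "Phi H1 H2 t s r u v =
     ennreal (indicator {0<..<t} r * indicator {0<..<s} r * r powr (1-H1-H2)) *
     ennreal ((u-r) powr (H1-3/2) * u powr (H1-1/2) * indicator {r<..t} u) *
     ennreal ((v-r) powr (H2-3/2) * v powr (H2-1/2) * indicator {r<..s} v)"

lemma Phi_meas: "(\<lambda>x. Phi H1 H2 t s (fst (fst x)) (snd (fst x)) (snd x)) \<in> borel_measurable ((lborel \<Otimes>\<^sub>M lborel) \<Otimes>\<^sub>M lborel)"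
  unfolding Phi_def indicator_def by (simp add: of_bool_def) measurable


lemma Phi_meas_raw[measurable (raw)]:
  "f \<in> borel_measurable M \<Longrightarrow> g \<in> borel_measurable M \<Longrightarrow> h \<in> borel_measurable M \<Longrightarrow>
   (\<lambda>x. Phi H1 H2 t s (f x) (g x) (h x)) \<in> borel_measurable M"
  unfolding Phi_def indicator_def by (simp add: of_bool_def) measurable

definition Fb :: "real \<Rightarrow> real \<Rightarrow> real \<Rightarrow> real \<Rightarrow> real" where
  "Fb H1 H2 u v = beta_fn H1 H2 u v * \<bar>u - v\<bar> powr (H1 + H2 - 2) * u powr (H1 - H2) * v powr (H2 - H1)"

lemma Phi_inner:
  assumes H: "1/2 < H1" "H1 < 1" "1/2 < H2" "H2 < 1" and uv: "u \<noteq> v"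
  shows "(\<integral>\<^sup>+ r. Phi H1 H2 t s r u v \<partial>lborel) = ennreal (Fb H1 H2 u v * indicator {0<..t} u * indicator {0<..s} v)"
proof (cases "u \<in> {0<..t} \<and> v \<in> {0<..s}")
  case False
  then have "Phi H1 H2 t s r u v = 0" for r
    unfolding Phi_def by (auto simp: indicator_def)
  then show ?thesis using False by (auto simp: indicator_def)
next
  case True
  then have u: "0 < u" "u \<le> t" and v: "0 < v" "v \<le> s" by auto
  have "Phi H1 H2 t s r u v = ennreal (u powr (H1-1/2) * v powr (H2-1/2)) *
     ennreal (r powr (1-H1-H2) * (u-r) powr (H1-3/2) * (v-r) powr (H2-3/2) * indicator {0<..<min u v} r)" for r
  proof (cases "r \<in> {0<..<min u v}")
    case True
    then show ?thesis using u v unfolding Phi_def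
      by (simp add: ennreal_mult'[symmetric] ennreal_mult[symmetric] indicator_def mult_ac)
  next
    case False
    then show ?thesis using u v unfolding Phi_def by (auto simp: indicator_def)
  qed
  then have "(\<integral>\<^sup>+ r. Phi H1 H2 t s r u v \<partial>lborel) = ennreal (u powr (H1-1/2) * v powr (H2-1/2)) *
     (\<integral>\<^sup>+ r. ennreal (r powr (1-H1-H2) * (u-r) powr (H1-3/2) * (v-r) powr (H2-3/2) * indicator {0<..<min u v} r) \<partial>lborel)"
    by (simp add: nn_integral_cmult)
  also have "\<dots> = ennreal (u powr (H1-1/2) * v powr (H2-1/2)) *
     ennreal (beta_fn H1 H2 u v * \<bar>u - v\<bar> powr (H1+H2-2) * u powr (1/2-H2) * v powr (1/2-H1))"
    unfolding inner_beta[OF H u(1) v(1) uv] beta_fn_def ..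
  also have "\<dots> = ennreal (Fb H1 H2 u v)"
  proof -
    have "u powr (H1-1/2) * u powr (1/2-H2) = u powr (H1-H2)" using u by (simp add: powr_add[symmetric])
    moreover have "v powr (H2-1/2) * v powr (1/2-H1) = v powr (H2-H1)" using v by (simp add: powr_add[symmetric])
    moreover have "beta_fn H1 H2 u v \<ge> 0" using H unfolding beta_fn_def by (simp add: Beta_def Gamma_real_pos)
    ultimately show ?thesis unfolding Fb_def
      by (subst ennreal_mult[symmetric]) (auto simp: mult_ac)
  qed
  finally show ?thesis using True by simp
qed


lemma KK_repr:
  assumes H: "1/2 < H1" "H1 < 1" "1/2 < H2" "H2 < 1"
  shows "ennreal (KH H1 t r * KH H2 s r) = ennreal (cH H1 * cH H2) * (\<integral>\<^sup>+ u. \<integral>\<^sup>+ v. Phi H1 H2 t s r u v \<partial>lborel \<partial>lborel)"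
proof -
  have "(\<integral>\<^sup>+ u. \<integral>\<^sup>+ v. Phi H1 H2 t s r u v \<partial>lborel \<partial>lborel)
     = ennreal (indicator {0<..<t} r * indicator {0<..<s} r * r powr (1-H1-H2)) * NH H1 t r * NH H2 s r"
    unfolding Phi_def NH_def by (simp add: nn_integral_cmult nn_integral_multc mult.assoc)
  moreover have "ennreal (KH H1 t r * KH H2 s r) = ennreal (KH H1 t r) * ennreal (KH H2 s r)"
    using KH_repr(2)[of H1 t r] KH_repr(2)[of H2 s r] H by (simp add: ennreal_mult)
  moreover have "ennreal (indicator {0<..<t} r * r powr (1/2-H1)) * ennreal (indicator {0<..<s} r * r powr (1/2-H2))
      = ennreal (indicator {0<..<t} r * indicator {0<..<s} r * r powr (1-H1-H2))"
  proof (cases "r > 0")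
    case True
    then have "r powr (1/2-H1) * r powr (1/2-H2) = r powr (1-H1-H2)" by (simp add: powr_add[symmetric] algebra_simps)
    then show ?thesis by (simp add: ennreal_mult[symmetric] mult_ac indicator_def)
  qed (simp add: indicator_def)
  moreover have "ennreal (cH H1 * cH H2) = ennreal (cH H1) * ennreal (cH H2)"
    using cH_pos[of H1] cH_pos[of H2] H by (simp add: ennreal_mult)
  ultimately show ?thesis
    using KH_repr(1)[of H1 t r] KH_repr(1)[of H2 s r] H
    by (simp add: mult_ac)
qed


lemma analytic:
  assumes H: "1/2 < H1" "H1 < 1" "1/2 < H2" "H2 < 1"
  shows "(\<integral>\<^sup>+ r. ennreal (KH H1 t r * KH H2 s r) \<partial>lborel) =
    ennreal (cH H1 * cH H2) * (\<integral>\<^sup>+ u. \<integral>\<^sup>+ v. ennreal (Fb H1 H2 u v * indicator {0<..t} u * indicator {0<..s} v) \<partial>lborel \<partial>lborel)"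
proof -
  have "(\<integral>\<^sup>+ r. ennreal (KH H1 t r * KH H2 s r) \<partial>lborel) =
     (\<integral>\<^sup>+ r. ennreal (cH H1 * cH H2) * (\<integral>\<^sup>+ u. \<integral>\<^sup>+ v. Phi H1 H2 t s r u v \<partial>lborel \<partial>lborel) \<partial>lborel)"
    using KK_repr[OF H] by simp
  also have "\<dots> = ennreal (cH H1 * cH H2) * (\<integral>\<^sup>+ r. \<integral>\<^sup>+ u. \<integral>\<^sup>+ v. Phi H1 H2 t s r u v \<partial>lborel \<partial>lborel \<partial>lborel)"
    by (rule nn_integral_cmult) measurable
  also have "(\<integral>\<^sup>+ r. \<integral>\<^sup>+ u. \<integral>\<^sup>+ v. Phi H1 H2 t s r u v \<partial>lborel \<partial>lborel \<partial>lborel)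
      = (\<integral>\<^sup>+ u. \<integral>\<^sup>+ r. \<integral>\<^sup>+ v. Phi H1 H2 t s r u v \<partial>lborel \<partial>lborel \<partial>lborel)"
    by (rule lborel_pair.Fubini'[symmetric]) measurable
  also have "\<dots> = (\<integral>\<^sup>+ u. \<integral>\<^sup>+ v. \<integral>\<^sup>+ r. Phi H1 H2 t s r u v \<partial>lborel \<partial>lborel \<partial>lborel)"
    by (rule nn_integral_cong, rule lborel_pair.Fubini'[symmetric]) measurable
  also have "\<dots> = (\<integral>\<^sup>+ u. \<integral>\<^sup>+ v. ennreal (Fb H1 H2 u v * indicator {0<..t} u * indicator {0<..s} v) \<partial>lborel \<partial>lborel)"
  proof (rule nn_integral_cong)
    fix u :: real
    show "(\<integral>\<^sup>+ v. \<integral>\<^sup>+ r. Phi H1 H2 t s r u v \<partial>lborel \<partial>lborel) = (\<integral>\<^sup>+ v. ennreal (Fb H1 H2 u v * indicator {0<..t} u * indicator {0<..s} v) \<partial>lborel)"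
      apply (rule nn_integral_cong_AE)
      using AE_lborel_singleton[of u] by eventually_elim (use Phi_inner[OF H] in auto)
  qed
  finally show ?thesis .
qed


lemma NH_meas[measurable]: "(\<lambda>r. NH H t r) \<in> borel_measurable lborel"
  unfolding NH_def indicator_def by (simp add: of_bool_def) measurable

lemma KH_meas[measurable]:
  assumes "1/2 < H" "H < 1"
  shows "(\<lambda>r. KH H t r) \<in> borel_measurable borel"
proof -
  have "KH H t r = enn2real (ennreal (cH H) * ennreal (indicator {0<..<t} r * r powr (1/2-H)) * NH H t r)" for r
    using KH_repr[OF assms, of t r] by (metis enn2real_ennreal)
  then have e: "(\<lambda>r. KH H t r) = (\<lambda>r. enn2real (ennreal (cH H) * ennreal (indicator {0<..<t} r * r powr (1/2-H)) * NH H t r))"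
    by auto
  show ?thesis unfolding e by measurable
qed

lemma Fb_meas[measurable]: "(\<lambda>x. Fb H1 H2 (f x) (g x)) \<in> borel_measurable M"
  if [measurable]: "f \<in> borel_measurable M" "g \<in> borel_measurable M"
  unfolding Fb_def beta_fn_def by measurable

lemma Fb_nonneg: assumes "1/2 < H1" "H1 < 1" "1/2 < H2" "H2 < 1" shows "Fb H1 H2 u v \<ge> 0"
proof -
  have "beta_fn H1 H2 u v \<ge> 0" using assms unfolding beta_fn_def by (simp add: Beta_def Gamma_real_pos)
  then show ?thesis unfolding Fb_def by simp
qed

lemma rhs_conv:
  assumes H: "1/2 < H1" "H1 < 1" "1/2 < H2" "H2 < 1"
    and fin: "(\<integral>\<^sup>+ r. ennreal (KH H1 t r * KH H2 s r) \<partial>lborel) < \<infinity>"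
  shows "(LINT r|lborel. KH H1 t r * KH H2 s r) = cH H1 * cH H2 * (LBINT u:{0..t}. (LBINT v:{0..s}. Fb H1 H2 u v))"
proof -
  define Q where "Q = (\<integral>\<^sup>+ u. \<integral>\<^sup>+ v. ennreal (Fb H1 H2 u v * indicator {0<..t} u * indicator {0<..s} v) \<partial>lborel \<partial>lborel)"
  have c: "cH H1 * cH H2 > 0" using cH_pos H by simp
  have [measurable]: "(\<lambda>r. KH H1 t r) \<in> borel_measurable borel" "(\<lambda>r. KH H2 s r) \<in> borel_measurable borel"
    using KH_meas H by auto
  have KKnn: "KH H1 t r * KH H2 s r \<ge> 0" for r using KH_repr(2)[of H1 t r] KH_repr(2)[of H2 s r] H by simp
  have L: "(LINT r|lborel. KH H1 t r * KH H2 s r) = enn2real (ennreal (cH H1 * cH H2) * Q)"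
    by (subst integral_eq_nn_integral) (use KKnn analytic[OF H] in \<open>auto simp: Q_def\<close>)
  have Qfin: "Q < \<infinity>" using fin c unfolding analytic[OF H] Q_def[symmetric]
    by (auto simp: ennreal_mult_less_top)
  have AEu: "AE u in lborel. (\<integral>\<^sup>+ v. ennreal (Fb H1 H2 u v * indicator {0<..t} u * indicator {0<..s} v) \<partial>lborel) \<noteq> \<infinity>"
    by (rule nn_integral_PInf_AE) (use Qfin in \<open>auto simp: Q_def\<close>)
  have inner: "(LBINT v:{0..s}. Fb H1 H2 u v) = enn2real (\<integral>\<^sup>+ v. ennreal (Fb H1 H2 u v * indicator {0<..s} v) \<partial>lborel)" for u
  proof -
    have "(LBINT v:{0..s}. Fb H1 H2 u v) = enn2real (\<integral>\<^sup>+ v. ennreal (indicator {0..s} v * Fb H1 H2 u v) \<partial>lborel)"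
      unfolding set_lebesgue_integral_def by (subst integral_eq_nn_integral) (auto simp: Fb_nonneg[OF H])
    also have "(\<integral>\<^sup>+ v. ennreal (indicator {0..s} v * Fb H1 H2 u v) \<partial>lborel) = (\<integral>\<^sup>+ v. ennreal (Fb H1 H2 u v * indicator {0<..s} v) \<partial>lborel)"
      by (rule nn_integral_cong) (auto simp: indicator_def Fb_def)
    finally show ?thesis .
  qed
  have "(LBINT u:{0..t}. (LBINT v:{0..s}. Fb H1 H2 u v))
      = enn2real (\<integral>\<^sup>+ u. ennreal (indicator {0..t} u * enn2real (\<integral>\<^sup>+ v. ennreal (Fb H1 H2 u v * indicator {0<..s} v) \<partial>lborel)) \<partial>lborel)"
    unfolding inner unfolding set_lebesgue_integral_def by (subst integral_eq_nn_integral) auto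
  also have "(\<integral>\<^sup>+ u. ennreal (indicator {0..t} u * enn2real (\<integral>\<^sup>+ v. ennreal (Fb H1 H2 u v * indicator {0<..s} v) \<partial>lborel)) \<partial>lborel) = Q"
    unfolding Q_def
  proof (rule nn_integral_cong_AE)
    show "AE u in lborel. ennreal (indicator {0..t} u * enn2real (\<integral>\<^sup>+ v. ennreal (Fb H1 H2 u v * indicator {0<..s} v) \<partial>lborel))
       = (\<integral>\<^sup>+ v. ennreal (Fb H1 H2 u v * indicator {0<..t} u * indicator {0<..s} v) \<partial>lborel)"
      using AEu
    proof eventually_elim
      case (elim u)
      show ?case
      proof (cases "u \<in> {0<..t}")
        case True
        then show ?thesis using elim by (simp add: indicator_def ennreal_enn2real_if)
      next
        case False
        then consider "u = 0" | "u \<notin> {0..t}" by fastforce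
        then show ?thesis by cases (auto simp: indicator_def Fb_def)
      qed
    qed
  qed
  finally show ?thesis unfolding L using c by (simp add: enn2real_mult)
qed



lemma sq_prod_int:
  fixes Z W :: "'a \<Rightarrow> real"
  assumes [measurable]: "Z \<in> borel_measurable M" "W \<in> borel_measurable M"
    and "integrable M (\<lambda>x. (Z x)\<^sup>2)" "integrable M (\<lambda>x. (W x)\<^sup>2)"
  shows "integrable M (\<lambda>x. Z x * W x)"
proof (rule Bochner_Integration.integrable_bound)
  show "integrable M (\<lambda>x. (Z x)\<^sup>2 + (W x)\<^sup>2)" using assms by auto
  show "AE x in M. norm (Z x * W x) \<le> norm ((Z x)\<^sup>2 + (W x)\<^sup>2)"
  proof (intro AE_I2)
    fix x
    have "2 * (\<bar>Z x\<bar> * \<bar>W x\<bar>) \<le> (Z x)\<^sup>2 + (W x)\<^sup>2" using sum_squares_bound[of "\<bar>Z x\<bar>" "\<bar>W x\<bar>"] by (simp add: mult.assoc)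
    moreover have "\<bar>Z x\<bar> * \<bar>W x\<bar> \<ge> 0" by simp
    ultimately have "\<bar>Z x\<bar> * \<bar>W x\<bar> \<le> (Z x)\<^sup>2 + (W x)\<^sup>2" by linarith
    then show "norm (Z x * W x) \<le> norm ((Z x)\<^sup>2 + (W x)\<^sup>2)"
      by (simp add: abs_mult)
  qed
qed simp

lemma real_CS:
  fixes Z W :: "'a \<Rightarrow> real"
  assumes [measurable]: "Z \<in> borel_measurable M" "W \<in> borel_measurable M"
    and iZ: "integrable M (\<lambda>x. (Z x)\<^sup>2)" and iW: "integrable M (\<lambda>x. (W x)\<^sup>2)"
  shows "\<bar>\<integral>x. Z x * W x \<partial>M\<bar> \<le> sqrt (\<integral>x. (Z x)\<^sup>2 \<partial>M) * sqrt (\<integral>x. (W x)\<^sup>2 \<partial>M)"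
proof -
  have iZW: "integrable M (\<lambda>x. \<bar>Z x * W x\<bar>)" using sq_prod_int[OF assms] by auto
  then have iZW': "integrable M (\<lambda>x. \<bar>Z x\<bar> * \<bar>W x\<bar>)" by (simp add: abs_mult)
  have "(\<integral>\<^sup>+x. ennreal \<bar>Z x\<bar> * ennreal \<bar>W x\<bar> \<partial>M)\<^sup>2 \<le> (\<integral>\<^sup>+x. (ennreal \<bar>Z x\<bar>) ^ 2 \<partial>M) * (\<integral>\<^sup>+x. (ennreal \<bar>W x\<bar>) ^ 2 \<partial>M)"
    by (rule Cauchy_Schwarz_nn_integral) auto
  also have "(\<integral>\<^sup>+x. (ennreal \<bar>Z x\<bar>) ^ 2 \<partial>M) = ennreal (\<integral>x. (Z x)\<^sup>2 \<partial>M)"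
    by (subst nn_integral_eq_integral[symmetric]) (auto simp: iZ ennreal_power)
  also have "(\<integral>\<^sup>+x. (ennreal \<bar>W x\<bar>) ^ 2 \<partial>M) = ennreal (\<integral>x. (W x)\<^sup>2 \<partial>M)"
    by (subst nn_integral_eq_integral[symmetric]) (auto simp: iW ennreal_power)
  also have "(\<integral>\<^sup>+x. ennreal \<bar>Z x\<bar> * ennreal \<bar>W x\<bar> \<partial>M) = ennreal (\<integral>x. \<bar>Z x * W x\<bar> \<partial>M)"
    by (subst nn_integral_eq_integral[symmetric]) (auto simp: iZW' ennreal_mult'[symmetric] abs_mult)
  finally have *: "(ennreal (\<integral>x. \<bar>Z x * W x\<bar> \<partial>M))\<^sup>2 \<le> ennreal (\<integral>x. (Z x)\<^sup>2 \<partial>M) * ennreal (\<integral>x. (W x)\<^sup>2 \<partial>M)" .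
  have n1: "(\<integral>x. \<bar>Z x * W x\<bar> \<partial>M) \<ge> 0" "(\<integral>x. (Z x)\<^sup>2 \<partial>M) \<ge> 0" "(\<integral>x. (W x)\<^sup>2 \<partial>M) \<ge> 0"
    by (auto intro!: integral_nonneg_AE)
  have "(\<integral>x. \<bar>Z x * W x\<bar> \<partial>M)\<^sup>2 \<le> (\<integral>x. (Z x)\<^sup>2 \<partial>M) * (\<integral>x. (W x)\<^sup>2 \<partial>M)"
    using * n1 by (simp add: ennreal_power ennreal_mult[symmetric])
  then have "sqrt ((\<integral>x. \<bar>Z x * W x\<bar> \<partial>M)\<^sup>2) \<le> sqrt ((\<integral>x. (Z x)\<^sup>2 \<partial>M) * (\<integral>x. (W x)\<^sup>2 \<partial>M))"
    by (rule real_sqrt_le_mono)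
  then have "(\<integral>x. \<bar>Z x * W x\<bar> \<partial>M) \<le> sqrt (\<integral>x. (Z x)\<^sup>2 \<partial>M) * sqrt (\<integral>x. (W x)\<^sup>2 \<partial>M)"
    by (simp add: real_sqrt_mult integral_nonneg_AE)
  moreover have "\<bar>\<integral>x. Z x * W x \<partial>M\<bar> \<le> (\<integral>x. \<bar>Z x * W x\<bar> \<partial>M)"
    by (rule integral_abs_bound)
  ultimately show ?thesis by linarith
qed


lemma sq_le: "(a::real)\<^sup>2 \<le> 2 * (a - b)\<^sup>2 + 2 * b\<^sup>2"
proof -
  have "2 * (a - b)\<^sup>2 + 2 * b\<^sup>2 = a\<^sup>2 + (a - 2*b)\<^sup>2" by (simp add: power2_diff algebra_simps)
  then show ?thesis by simp
qed

lemma L2_of_approx: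
  fixes X :: "'a \<Rightarrow> real" and Xk :: "nat \<Rightarrow> 'a \<Rightarrow> real"
  assumes [measurable]: "X \<in> borel_measurable M" "\<And>k. Xk k \<in> borel_measurable M"
    and iXk: "\<And>k. integrable M (\<lambda>x. (Xk k x)\<^sup>2)"
    and cX: "(\<lambda>k. \<integral>\<^sup>+x. ennreal ((X x - Xk k x)\<^sup>2) \<partial>M) \<longlonglongrightarrow> 0"
  shows "integrable M (\<lambda>x. (X x)\<^sup>2)"
    and "\<And>k. integrable M (\<lambda>x. (X x - Xk k x)\<^sup>2)"
    and "(\<lambda>k. \<integral>x. (X x - Xk k x)\<^sup>2 \<partial>M) \<longlonglongrightarrow> 0"
proof -
  have "eventually (\<lambda>k. (\<integral>\<^sup>+x. ennreal ((X x - Xk k x)\<^sup>2) \<partial>M) < 1) sequentially"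
    using order_tendstoD(2)[OF cX] by simp
  then obtain k where k: "(\<integral>\<^sup>+x. ennreal ((X x - Xk k x)\<^sup>2) \<partial>M) < 1"
    by (auto simp: eventually_sequentially)
  have "(\<integral>\<^sup>+x. ennreal (norm ((X x)\<^sup>2)) \<partial>M) \<le> (\<integral>\<^sup>+x. 2 * ennreal ((X x - Xk k x)\<^sup>2) + 2 * ennreal ((Xk k x)\<^sup>2) \<partial>M)"
  proof (intro nn_integral_mono)
    fix x
    have "ennreal (norm ((X x)\<^sup>2)) \<le> ennreal (2 * (X x - Xk k x)\<^sup>2 + 2 * (Xk k x)\<^sup>2)"
      by (rule ennreal_leI) (simp add: sq_le)
    also have "\<dots> = 2 * ennreal ((X x - Xk k x)\<^sup>2) + 2 * ennreal ((Xk k x)\<^sup>2)"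
      by (simp add: ennreal_plus ennreal_mult)
    finally show "ennreal (norm ((X x)\<^sup>2)) \<le> 2 * ennreal ((X x - Xk k x)\<^sup>2) + 2 * ennreal ((Xk k x)\<^sup>2)" .
  qed
  also have "\<dots> = 2 * (\<integral>\<^sup>+x. ennreal ((X x - Xk k x)\<^sup>2) \<partial>M) + 2 * (\<integral>\<^sup>+x. ennreal ((Xk k x)\<^sup>2) \<partial>M)"
    by (simp add: nn_integral_add nn_integral_cmult)
  also have "\<dots> < \<infinity>"
  proof -
    have A: "(\<integral>\<^sup>+x. ennreal ((X x - Xk k x)\<^sup>2) \<partial>M) < \<infinity>"
      using order.strict_trans[OF k ennreal_one_less_top] by simp
    have B: "(\<integral>\<^sup>+x. ennreal ((Xk k x)\<^sup>2) \<partial>M) < \<infinity>"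
      by (subst nn_integral_eq_integral[OF iXk]) auto
    show ?thesis using A B by (simp add: ennreal_mult_less_top)
  qed
  finally show iX: "integrable M (\<lambda>x. (X x)\<^sup>2)" by (intro integrableI_bounded) auto
  show iD: "integrable M (\<lambda>x. (X x - Xk k x)\<^sup>2)" for k
  proof -
    have "integrable M (\<lambda>x. (X x)\<^sup>2 - 2 * (X x * Xk k x) + (Xk k x)\<^sup>2)"
      using iX iXk sq_prod_int[of X M "Xk k"] by auto
    then show ?thesis by (simp add: power2_diff mult.assoc algebra_simps)
  qed
  have "(\<lambda>k. ennreal (\<integral>x. (X x - Xk k x)\<^sup>2 \<partial>M)) \<longlonglongrightarrow> ennreal 0"
    using cX by (subst (asm) nn_integral_eq_integral[OF iD]) auto
  then show "(\<lambda>k. \<integral>x. (X x - Xk k x)\<^sup>2 \<partial>M) \<longlonglongrightarrow> 0"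
    by (subst (asm) tendsto_ennreal_iff) auto
qed


lemma L2_limit:
  fixes X Y :: "'a \<Rightarrow> real" and Xk Yk :: "nat \<Rightarrow> 'a \<Rightarrow> real"
  assumes [measurable]: "X \<in> borel_measurable M" "Y \<in> borel_measurable M"
    "\<And>k. Xk k \<in> borel_measurable M" "\<And>k. Yk k \<in> borel_measurable M"
    and iXk: "\<And>k. integrable M (\<lambda>x. (Xk k x)\<^sup>2)" and iYk: "\<And>k. integrable M (\<lambda>x. (Yk k x)\<^sup>2)"
    and cX: "(\<lambda>k. \<integral>\<^sup>+x. ennreal ((X x - Xk k x)\<^sup>2) \<partial>M) \<longlonglongrightarrow> 0"
    and cY: "(\<lambda>k. \<integral>\<^sup>+x. ennreal ((Y x - Yk k x)\<^sup>2) \<partial>M) \<longlonglongrightarrow> 0"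
  shows "integrable M (\<lambda>x. X x * Y x)"
    and "(\<lambda>k. \<integral>x. Xk k x * Yk k x \<partial>M) \<longlonglongrightarrow> (\<integral>x. X x * Y x \<partial>M)"
proof -
  note LX = L2_of_approx[of X M Xk, OF assms(1,3) iXk cX]
  note LY = L2_of_approx[of Y M Yk, OF assms(2,4) iYk cY]
  show iXY: "integrable M (\<lambda>x. X x * Y x)" by (rule sq_prod_int[OF assms(1,2) LX(1) LY(1)])
  define a where "a k = (\<integral>x. (X x - Xk k x)\<^sup>2 \<partial>M)" for k
  define b where "b k = (\<integral>x. (Y x - Yk k x)\<^sup>2 \<partial>M)" for k
  define AX where "AX = (\<integral>x. (X x)\<^sup>2 \<partial>M)"
  define AY where "AY = (\<integral>x. (Y x)\<^sup>2 \<partial>M)"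
  have a0: "a \<longlonglongrightarrow> 0" using LX(3) unfolding a_def .
  have b0: "b \<longlonglongrightarrow> 0" using LY(3) unfolding b_def .
  have bound: "norm ((\<integral>x. Xk k x * Yk k x \<partial>M) - (\<integral>x. X x * Y x \<partial>M))
      \<le> sqrt (a k) * sqrt (2 * b k + 2 * AY) + sqrt AX * sqrt (b k)" for k
  proof -
    have i1: "integrable M (\<lambda>x. (X x - Xk k x)\<^sup>2)" by (rule LX(2))
    have i1': "integrable M (\<lambda>x. (Xk k x - X x)\<^sup>2)" using i1 by (simp add: power2_commute)
    have i2: "integrable M (\<lambda>x. (Y x - Yk k x)\<^sup>2)" by (rule LY(2))
    have i2': "integrable M (\<lambda>x. (Yk k x - Y x)\<^sup>2)" using i2 by (simp add: power2_commute)
    have j1: "integrable M (\<lambda>x. (Xk k x - X x) * Yk k x)" using sq_prod_int[OF _ _ i1' iYk] by auto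
    have j2: "integrable M (\<lambda>x. X x * (Yk k x - Y x))" using sq_prod_int[OF _ _ LX(1) i2'] by auto
    have "(\<integral>x. Xk k x * Yk k x \<partial>M) - (\<integral>x. X x * Y x \<partial>M)
        = (\<integral>x. (Xk k x - X x) * Yk k x \<partial>M) + (\<integral>x. X x * (Yk k x - Y x) \<partial>M)"
    proof -
      have "(\<integral>x. (Xk k x - X x) * Yk k x \<partial>M) + (\<integral>x. X x * (Yk k x - Y x) \<partial>M)
          = (\<integral>x. (Xk k x - X x) * Yk k x + X x * (Yk k x - Y x) \<partial>M)"
        using j1 j2 by simp
      also have "\<dots> = (\<integral>x. Xk k x * Yk k x - X x * Y x \<partial>M)"
        by (rule Bochner_Integration.integral_cong) (auto simp: algebra_simps)
      also have "\<dots> = (\<integral>x. Xk k x * Yk k x \<partial>M) - (\<integral>x. X x * Y x \<partial>M)"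
        using iXY sq_prod_int[OF _ _ iXk iYk, of k k] by (simp add: Bochner_Integration.integral_diff)
      finally show ?thesis by simp
    qed
    also have "norm \<dots> \<le> \<bar>\<integral>x. (Xk k x - X x) * Yk k x \<partial>M\<bar> + \<bar>\<integral>x. X x * (Yk k x - Y x) \<partial>M\<bar>"
      by simp
    also have "\<bar>\<integral>x. (Xk k x - X x) * Yk k x \<partial>M\<bar> \<le> sqrt (\<integral>x. (Xk k x - X x)\<^sup>2 \<partial>M) * sqrt (\<integral>x. (Yk k x)\<^sup>2 \<partial>M)"
      by (rule real_CS) (auto simp: i1' iYk)
    also have "(\<integral>x. (Xk k x - X x)\<^sup>2 \<partial>M) = a k" unfolding a_def by (simp add: power2_commute)
    also have "\<bar>\<integral>x. X x * (Yk k x - Y x) \<partial>M\<bar> \<le> sqrt AX * sqrt (\<integral>x. (Yk k x - Y x)\<^sup>2 \<partial>M)"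
      unfolding AX_def by (rule real_CS) (auto simp: i2' LX(1))
    also have "(\<integral>x. (Yk k x - Y x)\<^sup>2 \<partial>M) = b k" unfolding b_def by (simp add: power2_commute)
    also have "sqrt (a k) * sqrt (\<integral>x. (Yk k x)\<^sup>2 \<partial>M) \<le> sqrt (a k) * sqrt (2 * b k + 2 * AY)"
    proof -
      have "(\<integral>x. (Yk k x)\<^sup>2 \<partial>M) \<le> (\<integral>x. 2 * (Yk k x - Y x)\<^sup>2 + 2 * (Y x)\<^sup>2 \<partial>M)"
        by (rule integral_mono) (auto simp: iYk i2' LY(1) sq_le)
      also have "\<dots> = 2 * b k + 2 * AY"
        using i2' LY(1) by (simp add: b_def AY_def power2_commute)
      moreover have "a k \<ge> 0" unfolding a_def by (rule integral_nonneg_AE) auto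
      ultimately show ?thesis by (intro mult_left_mono real_sqrt_le_mono) auto
    qed
    finally show ?thesis by simp
  qed
  have "(\<lambda>k. sqrt (a k) * sqrt (2 * b k + 2 * AY) + sqrt AX * sqrt (b k)) \<longlonglongrightarrow> sqrt 0 * sqrt (2 * 0 + 2 * AY) + sqrt AX * sqrt 0"
    by (intro tendsto_intros a0 b0)
  then have "(\<lambda>k. sqrt (a k) * sqrt (2 * b k + 2 * AY) + sqrt AX * sqrt (b k)) \<longlonglongrightarrow> 0" by simp
  then have "(\<lambda>k. (\<integral>x. Xk k x * Yk k x \<partial>M) - (\<integral>x. X x * Y x \<partial>M)) \<longlonglongrightarrow> 0"
    by (rule Lim_null_comparison[rotated]) (use bound in auto)
  then show "(\<lambda>k. \<integral>x. Xk k x * Yk k x \<partial>M) \<longlonglongrightarrow> (\<integral>x. X x * Y x \<partial>M)"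
    by (simp add: LIM_zero_iff)
qed



lemma ind_prod_int:
  fixes a b c d :: real
  assumes "a \<le> b" "c \<le> d"
  shows "integrable lborel (\<lambda>r. indicator {a<..b} r * indicator {c<..d} r :: real)"
    and "(LINT r|lborel. indicator {a<..b} r * indicator {c<..d} r :: real) = min b d - min b c - min a d + min a c"
proof -
  have e: "(\<lambda>r. indicator {a<..b} r * indicator {c<..d} r :: real) = indicator {max a c<..min b d}"
    by (simp add: indicator_inter_arith[symmetric])
  show "integrable lborel (\<lambda>r. indicator {a<..b} r * indicator {c<..d} r :: real)"
    unfolding e by (cases "max a c \<le> min b d") auto
  show "(LINT r|lborel. indicator {a<..b} r * indicator {c<..d} r :: real) = min b d - min b c - min a d + min a c"
    unfolding e using assms by (cases "max a c \<le> min b d") (auto simp: min_def max_def split: if_splits)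
qed

lemma step_cov:
  fixes U V :: "real \<Rightarrow> 'a \<Rightarrow> real"
  assumes cov: "\<And>x y. 0 \<le> x \<Longrightarrow> 0 \<le> y \<Longrightarrow> integrable M (\<lambda>\<omega>. U x \<omega> * V y \<omega>) \<and> (\<integral>\<omega>. U x \<omega> * V y \<omega> \<partial>M) = \<rho> * min x y"
    and ab: "\<And>i. 0 \<le> a i \<and> a i \<le> b i" and cd: "\<And>j. 0 \<le> c j \<and> c j \<le> d j"
  shows "integrable M (\<lambda>\<omega>. step_int U n ca a b \<omega> * step_int V m cb c d \<omega>)"
    and "(\<integral>\<omega>. step_int U n ca a b \<omega> * step_int V m cb c d \<omega> \<partial>M) = \<rho> * (LINT r|lborel. step_fun n ca a b r * step_fun m cb c d r)"
proof -
  define P where "P i j \<omega> = ca i * cb j * (U (b i) \<omega> * V (d j) \<omega> - U (b i) \<omega> * V (c j) \<omega> - U (a i) \<omega> * V (d j) \<omega> + U (a i) \<omega> * V (c j) \<omega>)" for i j \<omega>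
  have e: "step_int U n ca a b \<omega> * step_int V m cb c d \<omega> = (\<Sum>i<n. \<Sum>j<m. P i j \<omega>)" for \<omega>
    unfolding step_int_def P_def sum_product by (intro sum.cong refl) (simp add: algebra_simps)
  have icov: "\<And>x y. 0 \<le> x \<Longrightarrow> 0 \<le> y \<Longrightarrow> integrable M (\<lambda>\<omega>. U x \<omega> * V y \<omega>)" using cov by blast
  have nn: "0 \<le> a i" "0 \<le> b i" "0 \<le> c j" "0 \<le> d j" for i j using ab[of i] cd[of j] by auto
  have iP: "integrable M (P i j)" for i j
    unfolding P_def by (intro integrable_mult_right Bochner_Integration.integrable_add Bochner_Integration.integrable_diff icov nn)
  have EP: "(\<integral>\<omega>. P i j \<omega> \<partial>M) = ca i * cb j * (\<rho> * (min (b i) (d j) - min (b i) (c j) - min (a i) (d j) + min (a i) (c j)))" for i j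
  proof -
    have "(\<integral>\<omega>. P i j \<omega> \<partial>M) = ca i * cb j * ((\<integral>\<omega>. U (b i) \<omega> * V (d j) \<omega> \<partial>M) - (\<integral>\<omega>. U (b i) \<omega> * V (c j) \<omega> \<partial>M) - (\<integral>\<omega>. U (a i) \<omega> * V (d j) \<omega> \<partial>M) + (\<integral>\<omega>. U (a i) \<omega> * V (c j) \<omega> \<partial>M))"
      unfolding P_def using icov nn by (simp add: Bochner_Integration.integral_add Bochner_Integration.integral_diff)
    then show ?thesis using cov nn by (simp add: algebra_simps)
  qed
  show "integrable M (\<lambda>\<omega>. step_int U n ca a b \<omega> * step_int V m cb c d \<omega>)"
    unfolding e using iP by auto
  have "(\<integral>\<omega>. step_int U n ca a b \<omega> * step_int V m cb c d \<omega> \<partial>M) = (\<Sum>i<n. \<Sum>j<m. ca i * cb j * (\<rho> * (min (b i) (d j) - min (b i) (c j) - min (a i) (d j) + min (a i) (c j))))"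
    unfolding e using iP EP by (simp add: Bochner_Integration.integral_sum)
  moreover
  define Q where "Q i j r = ca i * cb j * (indicator {a i<..b i} r * indicator {c j<..d j} r :: real)" for i j r
  have e2: "step_fun n ca a b r * step_fun m cb c d r = (\<Sum>i<n. \<Sum>j<m. Q i j r)" for r
    unfolding step_fun_def Q_def sum_product by (intro sum.cong refl) (simp add: algebra_simps)
  have iQ: "integrable lborel (Q i j)" for i j
    unfolding Q_def using ind_prod_int(1) ab cd by auto
  have "(LINT r|lborel. step_fun n ca a b r * step_fun m cb c d r) = (\<Sum>i<n. \<Sum>j<m. ca i * cb j * (min (b i) (d j) - min (b i) (c j) - min (a i) (d j) + min (a i) (c j)))"
  proof -
    have "(LINT r|lborel. step_fun n ca a b r * step_fun m cb c d r) = (\<Sum>i<n. \<Sum>j<m. LINT r|lborel. Q i j r)"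
      unfolding e2 using iQ by (simp add: Bochner_Integration.integral_sum)
    also have "\<dots> = (\<Sum>i<n. \<Sum>j<m. ca i * cb j * (min (b i) (d j) - min (b i) (c j) - min (a i) (d j) + min (a i) (c j)))"
      unfolding Q_def using ind_prod_int(2) ab cd by simp
    finally show ?thesis .
  qed
  ultimately show "(\<integral>\<omega>. step_int U n ca a b \<omega> * step_int V m cb c d \<omega> \<partial>M) = \<rho> * (LINT r|lborel. step_fun n ca a b r * step_fun m cb c d r)"
    by (simp add: sum_distrib_left algebra_simps)
qed


lemma step_fun_prod_int:
  assumes ab: "\<And>i. a i \<le> b i" and cd: "\<And>j. c j \<le> d j"
  shows "integrable lborel (\<lambda>r. step_fun n ca a b r * step_fun m cb c d r)"
proof -
  define Q where "Q i j r = ca i * cb j * (indicator {a i<..b i} r * indicator {c j<..d j} r :: real)" for i j r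
  have e2: "(\<lambda>r. step_fun n ca a b r * step_fun m cb c d r) = (\<lambda>r. \<Sum>i<n. \<Sum>j<m. Q i j r)"
    unfolding step_fun_def Q_def sum_product by (intro ext sum.cong refl) (simp add: algebra_simps)
  have iQ: "integrable lborel (Q i j)" for i j
    unfolding Q_def using ind_prod_int(1) ab cd by auto
  show ?thesis unfolding e2 using iQ by auto
qed



context prob_space begin

lemma BM_L2:
  assumes BM: "std_BM M W" and x: "0 \<le> x"
  shows "integrable M (\<lambda>\<omega>. (W x \<omega>)\<^sup>2)" "expectation (\<lambda>\<omega>. (W x \<omega>)\<^sup>2) = x"
    "integrable M (W x)" "expectation (W x) = 0"
proof -
  from BM have meas: "\<And>t. W t \<in> borel_measurable M" and W0: "\<And>\<omega>. \<omega> \<in> space M \<Longrightarrow> W 0 \<omega> = 0"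
    and D: "\<And>s t. 0 \<le> s \<Longrightarrow> s < t \<Longrightarrow> distributed M lborel (\<lambda>\<omega>. W t \<omega> - W s \<omega>) (normal_density 0 (sqrt (t-s)))"
    unfolding std_BM_def by auto
  have "integrable M (\<lambda>\<omega>. (W x \<omega>)\<^sup>2) \<and> expectation (\<lambda>\<omega>. (W x \<omega>)\<^sup>2) = x \<and> integrable M (W x) \<and> expectation (W x) = 0"
  proof (cases "x = 0")
    case True
    then have e: "\<And>\<omega>. \<omega> \<in> space M \<Longrightarrow> W x \<omega> = 0" using W0 by auto
    have "integrable M (\<lambda>\<omega>. (W x \<omega>)\<^sup>2) \<longleftrightarrow> integrable M (\<lambda>\<omega>. 0::real)" by (rule Bochner_Integration.integrable_cong) (auto simp: e)
    moreover have "integrable M (W x) \<longleftrightarrow> integrable M (\<lambda>\<omega>. 0::real)" by (rule Bochner_Integration.integrable_cong) (auto simp: e)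
    moreover have "expectation (\<lambda>\<omega>. (W x \<omega>)\<^sup>2) = expectation (\<lambda>\<omega>. 0::real)" by (rule Bochner_Integration.integral_cong) (auto simp: e)
    moreover have "expectation (W x) = expectation (\<lambda>\<omega>. 0::real)" by (rule Bochner_Integration.integral_cong) (auto simp: e)
    ultimately show ?thesis using True by simp
  next
    case False
    then have xp: "0 < x" using x by simp
    have Dx: "distributed M lborel (\<lambda>\<omega>. W x \<omega> - W 0 \<omega>) (normal_density 0 (sqrt x))" using D[of 0 x] xp by simp
    have e: "\<And>\<omega>. \<omega> \<in> space M \<Longrightarrow> W x \<omega> - W 0 \<omega> = W x \<omega>" using W0 by auto
    have sp: "0 < sqrt x" using xp by simp
    have i1: "integrable M (\<lambda>\<omega>. W x \<omega> - W 0 \<omega>)"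
    proof -
      have "integrable lborel (\<lambda>z. normal_density 0 (sqrt x) z * z)" using integrable_normal_moment_nz_1[OF sp, of 0] by simp
      moreover have "integrable lborel (\<lambda>z. normal_density 0 (sqrt x) z * z) \<longleftrightarrow> integrable M (\<lambda>\<omega>. W x \<omega> - W 0 \<omega>)"
        by (rule distributed_integrable[OF Dx]) (auto simp: normal_density_nonneg)
      ultimately show ?thesis by simp
    qed
    have i2: "integrable M (\<lambda>\<omega>. (W x \<omega> - W 0 \<omega>)\<^sup>2)"
    proof -
      have "integrable lborel (\<lambda>z. normal_density 0 (sqrt x) z * z\<^sup>2)" using integrable_normal_moment[OF sp, of 0 2] by simp
      moreover have "integrable lborel (\<lambda>z. normal_density 0 (sqrt x) z * z\<^sup>2) \<longleftrightarrow> integrable M (\<lambda>\<omega>. (W x \<omega> - W 0 \<omega>)\<^sup>2)"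
        by (rule distributed_integrable[OF Dx]) (auto simp: normal_density_nonneg)
      ultimately show ?thesis by simp
    qed
    have E1: "expectation (\<lambda>\<omega>. W x \<omega> - W 0 \<omega>) = 0" using normal_distributed_expectation[OF sp Dx] .
    have V: "variance (\<lambda>\<omega>. W x \<omega> - W 0 \<omega>) = x" using normal_distributed_variance[OF sp Dx] xp by simp
    have E2: "expectation (\<lambda>\<omega>. (W x \<omega> - W 0 \<omega>)\<^sup>2) = x" using V E1 by simp
    have c1: "integrable M (\<lambda>\<omega>. W x \<omega> - W 0 \<omega>) \<longleftrightarrow> integrable M (W x)" by (rule Bochner_Integration.integrable_cong) (auto simp: e)
    have c2: "integrable M (\<lambda>\<omega>. (W x \<omega> - W 0 \<omega>)\<^sup>2) \<longleftrightarrow> integrable M (\<lambda>\<omega>. (W x \<omega>)\<^sup>2)" by (rule Bochner_Integration.integrable_cong) (auto simp: e)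
    have c3: "expectation (\<lambda>\<omega>. W x \<omega> - W 0 \<omega>) = expectation (W x)" by (rule Bochner_Integration.integral_cong) (auto simp: e)
    have c4: "expectation (\<lambda>\<omega>. (W x \<omega> - W 0 \<omega>)\<^sup>2) = expectation (\<lambda>\<omega>. (W x \<omega>)\<^sup>2)" by (rule Bochner_Integration.integral_cong) (auto simp: e)
    show ?thesis using i1 i2 E1 E2 c1 c2 c3 c4 by simp
  qed
  then show "integrable M (\<lambda>\<omega>. (W x \<omega>)\<^sup>2)" "expectation (\<lambda>\<omega>. (W x \<omega>)\<^sup>2) = x"
    "integrable M (W x)" "expectation (W x) = 0" by auto
qed

lemma BM_cov_le:
  assumes BM: "std_BM M W" and x: "0 \<le> x" and xy: "x \<le> y"
  shows "expectation (\<lambda>\<omega>. W x \<omega> * W y \<omega>) = x"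
proof -
  from BM have meas[measurable]: "\<And>t. W t \<in> borel_measurable M" and W0: "\<And>\<omega>. \<omega> \<in> space M \<Longrightarrow> W 0 \<omega> = 0"
    and I: "\<And>(n::nat) (tt::nat \<Rightarrow> real). 0 \<le> tt 0 \<and> (\<forall>i<n. tt i < tt (Suc i)) \<Longrightarrow>
        indep_vars (\<lambda>_. borel) (\<lambda>i \<omega>. W (tt (Suc i)) \<omega> - W (tt i) \<omega>) {..<n}"
    unfolding std_BM_def by auto
  show ?thesis
  proof (cases "x = 0")
    case True
    have "expectation (\<lambda>\<omega>. W x \<omega> * W y \<omega>) = expectation (\<lambda>\<omega>. 0::real)"
      by (rule Bochner_Integration.integral_cong) (auto simp: True W0)
    then show ?thesis using True by simp
  next
    case False
    then have xp: "0 < x" using x by simp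
    show ?thesis
    proof (cases "x = y")
      case True
      then show ?thesis using BM_L2[OF BM x] by (simp add: power2_eq_square)
    next
      case False
      then have xy': "x < y" using xy by simp
      define tt :: "nat \<Rightarrow> real" where "tt i = (if i = 0 then 0 else if i = 1 then x else y)" for i
      have "indep_vars (\<lambda>_. borel) (\<lambda>i \<omega>. W (tt (Suc i)) \<omega> - W (tt i) \<omega>) {..<2}"
        by (rule I) (use xp xy' in \<open>auto simp: tt_def less_2_cases_iff\<close>)
      from indep_var_restrict[OF this, of "{0}" "{1}"]
      have "indep_var (Pi\<^sub>M {0} (\<lambda>_. borel)) (\<lambda>\<omega>. restrict (\<lambda>i. W (tt (Suc i)) \<omega> - W (tt i) \<omega>) {0})
                      (Pi\<^sub>M {1} (\<lambda>_. borel)) (\<lambda>\<omega>. restrict (\<lambda>i. W (tt (Suc i)) \<omega> - W (tt i) \<omega>) {1})" by auto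
      from indep_var_compose[OF this, of "\<lambda>f. f 0" borel "\<lambda>f. f 1" borel]
      have IV: "indep_var borel (\<lambda>\<omega>. W x \<omega> - W 0 \<omega>) borel (\<lambda>\<omega>. W y \<omega> - W x \<omega>)"
        by (simp add: comp_def tt_def measurable_component_singleton)
      have ix: "integrable M (W x)" and iy: "integrable M (W y)" using BM_L2[OF BM] x xy by auto
      have i0: "integrable M (W 0)" using BM_L2[OF BM] by auto
      have EX: "expectation (W x) = 0" "expectation (W 0) = 0" using BM_L2[OF BM] x by auto
      have i1: "integrable M (\<lambda>\<omega>. W x \<omega> - W 0 \<omega>)" "integrable M (\<lambda>\<omega>. W y \<omega> - W x \<omega>)" using ix iy i0 by auto
      have P: "expectation (\<lambda>\<omega>. (W x \<omega> - W 0 \<omega>) * (W y \<omega> - W x \<omega>)) = 0"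
        using indep_var_lebesgue_integral[OF IV i1] ix i0 EX by simp
      have iP: "integrable M (\<lambda>\<omega>. (W x \<omega> - W 0 \<omega>) * (W y \<omega> - W x \<omega>))"
        using indep_var_integrable[OF IV i1] .
      have "expectation (\<lambda>\<omega>. W x \<omega> * W y \<omega>) = expectation (\<lambda>\<omega>. (W x \<omega> - W 0 \<omega>) * (W y \<omega> - W x \<omega>) + (W x \<omega>)\<^sup>2)"
        by (rule Bochner_Integration.integral_cong) (auto simp: W0 power2_eq_square algebra_simps)
      also have "\<dots> = x" using P iP BM_L2[OF BM x] by simp
      finally show ?thesis .
    qed
  qed
qed

lemma BM_cov:
  assumes BM: "std_BM M W" and x: "0 \<le> x" and y: "0 \<le> y"
  shows "integrable M (\<lambda>\<omega>. W x \<omega> * W y \<omega>)" "expectation (\<lambda>\<omega>. W x \<omega> * W y \<omega>) = min x y"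
proof -
  have [measurable]: "\<And>t. W t \<in> borel_measurable M" using BM unfolding std_BM_def by auto
  show "integrable M (\<lambda>\<omega>. W x \<omega> * W y \<omega>)"
    by (rule sq_prod_int) (use BM_L2[OF BM] x y in auto)
  show "expectation (\<lambda>\<omega>. W x \<omega> * W y \<omega>) = min x y"
  proof (cases "x \<le> y")
    case True then show ?thesis using BM_cov_le[OF BM x True] by simp
  next
    case False then show ?thesis using BM_cov_le[OF BM y, of x] by (simp add: mult.commute)
  qed
qed

lemma BM_cross:
  assumes BM1: "std_BM M W" and BM2: "std_BM M V"
    and ind: "indep_var (Pi\<^sub>M UNIV (\<lambda>_. borel)) (\<lambda>\<omega> t. W t \<omega>) (Pi\<^sub>M UNIV (\<lambda>_. borel)) (\<lambda>\<omega> t. V t \<omega>)"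
    and x: "0 \<le> x" and y: "0 \<le> y"
  shows "integrable M (\<lambda>\<omega>. W x \<omega> * V y \<omega>)" "expectation (\<lambda>\<omega>. W x \<omega> * V y \<omega>) = 0"
proof -
  from indep_var_compose[OF ind, of "\<lambda>f. f x" borel "\<lambda>f. f y" borel]
  have IV: "indep_var borel (W x) borel (V y)"
    by (simp add: comp_def measurable_component_singleton)
  have i: "integrable M (W x)" "integrable M (V y)" using BM_L2[OF BM1 x] BM_L2[OF BM2 y] by auto
  show "integrable M (\<lambda>\<omega>. W x \<omega> * V y \<omega>)" using indep_var_integrable[OF IV i] .
  show "expectation (\<lambda>\<omega>. W x \<omega> * V y \<omega>) = 0"
    using indep_var_lebesgue_integral[OF IV i] BM_L2[OF BM1 x] BM_L2[OF BM2 y] by simp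
qed

lemma corr_cov:
  assumes BM1: "std_BM M W" and BM2: "std_BM M V"
    and ind: "indep_var (Pi\<^sub>M UNIV (\<lambda>_. borel)) (\<lambda>\<omega> t. W t \<omega>) (Pi\<^sub>M UNIV (\<lambda>_. borel)) (\<lambda>\<omega> t. V t \<omega>)"
    and x: "0 \<le> x" and y: "0 \<le> y"
  shows "integrable M (\<lambda>\<omega>. W x \<omega> * (\<rho> * W y \<omega> + \<sigma> * V y \<omega>))"
    "expectation (\<lambda>\<omega>. W x \<omega> * (\<rho> * W y \<omega> + \<sigma> * V y \<omega>)) = \<rho> * min x y"
    "integrable M (\<lambda>\<omega>. (\<rho> * W x \<omega> + \<sigma> * V x \<omega>) * (\<rho> * W y \<omega> + \<sigma> * V y \<omega>))"
    "expectation (\<lambda>\<omega>. (\<rho> * W x \<omega> + \<sigma> * V x \<omega>) * (\<rho> * W y \<omega> + \<sigma> * V y \<omega>)) = (\<rho>\<^sup>2 + \<sigma>\<^sup>2) * min x y"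
proof -
  note c1 = BM_cov[OF BM1 x y] and c2 = BM_cov[OF BM2 x y]
  note d1 = BM_cross[OF BM1 BM2 ind x y] and d2 = BM_cross[OF BM1 BM2 ind y x]
  have e1: "(\<lambda>\<omega>. W x \<omega> * (\<rho> * W y \<omega> + \<sigma> * V y \<omega>)) = (\<lambda>\<omega>. \<rho> * (W x \<omega> * W y \<omega>) + \<sigma> * (W x \<omega> * V y \<omega>))"
    by (auto simp: algebra_simps)
  show "integrable M (\<lambda>\<omega>. W x \<omega> * (\<rho> * W y \<omega> + \<sigma> * V y \<omega>))"
    unfolding e1 using c1 d1 by auto
  show "expectation (\<lambda>\<omega>. W x \<omega> * (\<rho> * W y \<omega> + \<sigma> * V y \<omega>)) = \<rho> * min x y"
    unfolding e1 using c1 d1 by simp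
  have e2: "(\<lambda>\<omega>. (\<rho> * W x \<omega> + \<sigma> * V x \<omega>) * (\<rho> * W y \<omega> + \<sigma> * V y \<omega>)) =
     (\<lambda>\<omega>. \<rho>\<^sup>2 * (W x \<omega> * W y \<omega>) + \<rho> * \<sigma> * (W x \<omega> * V y \<omega>) + \<rho> * \<sigma> * (W y \<omega> * V x \<omega>) + \<sigma>\<^sup>2 * (V x \<omega> * V y \<omega>))"
    by (auto simp: algebra_simps power2_eq_square)
  show "integrable M (\<lambda>\<omega>. (\<rho> * W x \<omega> + \<sigma> * V x \<omega>) * (\<rho> * W y \<omega> + \<sigma> * V y \<omega>))"
    unfolding e2 using c1 c2 d1 d2 by auto
  show "expectation (\<lambda>\<omega>. (\<rho> * W x \<omega> + \<sigma> * V x \<omega>) * (\<rho> * W y \<omega> + \<sigma> * V y \<omega>)) = (\<rho>\<^sup>2 + \<sigma>\<^sup>2) * min x y"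
  proof -
    have "expectation (\<lambda>\<omega>. (\<rho> * W x \<omega> + \<sigma> * V x \<omega>) * (\<rho> * W y \<omega> + \<sigma> * V y \<omega>)) = \<rho>\<^sup>2 * min x y + \<rho> * \<sigma> * 0 + \<rho> * \<sigma> * 0 + \<sigma>\<^sup>2 * min x y"
      unfolding e2 using c1 c2 d1 d2 by simp
    then show ?thesis by (simp add: algebra_simps)
  qed
qed

end



theorem mainTheorem1:
  fixes M :: "'a measure"
    and Wt1 Wt2 W1 W2 B1 B2 :: "real \<Rightarrow> 'a \<Rightarrow> real"
    and T H1 H2 \<rho> :: real
  assumes "prob_space M"
    and "T > 0"
    and "1/2 < H1" "H1 < 1" "1/2 < H2" "H2 < 1"
    and "-1 \<le> \<rho>" "\<rho> \<le> 1"
    and "std_BM M Wt1" and "std_BM M Wt2"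
    and "prob_space.indep_var M (Pi\<^sub>M UNIV (\<lambda>_. borel)) (\<lambda>\<omega> t. Wt1 t \<omega>)
                                 (Pi\<^sub>M UNIV (\<lambda>_. borel)) (\<lambda>\<omega> t. Wt2 t \<omega>)"
    and "W1 = Wt1"
    and "W2 = (\<lambda>t \<omega>. \<rho> * Wt1 t \<omega> + sqrt (1 - \<rho>\<^sup>2) * Wt2 t \<omega>)"
    and "\<forall>t\<in>{0..T}. wiener_integral M W1 T (KH H1 t) (B1 t)"
    and "\<forall>t\<in>{0..T}. wiener_integral M W2 T (KH H2 t) (B2 t)"
    and "\<forall>\<omega>\<in>space M. continuous_on {0..T} (\<lambda>t. B1 t \<omega>)"
    and "\<forall>\<omega>\<in>space M. continuous_on {0..T} (\<lambda>t. B2 t \<omega>)"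
    and "t \<in> {0..T}" and "s \<in> {0..T}"
  shows "prob_space.expectation M (\<lambda>\<omega>. B1 t \<omega> * B2 s \<omega>) =
    \<rho> * cH H1 * cH H2 *
      (LBINT u:{0..t}. (LBINT v:{0..s}.
         beta_fn H1 H2 u v * \<bar>u - v\<bar> powr (H1 + H2 - 2) * u powr (H1 - H2) * v powr (H2 - H1)))"
proof -
  interpret prob_space M by fact
  have H: "1/2 < H1" "H1 < 1" "1/2 < H2" "H2 < 1" using assms by auto
  note BM1 = assms(9) and BM2 = assms(10) and ind = assms(11)
  define \<sigma> where "\<sigma> = sqrt (1 - \<rho>\<^sup>2)"
  have "\<rho>\<^sup>2 \<le> 1" using assms(7,8) by (simp add: abs_square_le_1)
  then have \<sigma>2: "\<rho>\<^sup>2 + \<sigma>\<^sup>2 = 1" unfolding \<sigma>_def by simp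
  have W1e: "W1 = Wt1" by fact
  have W2e: "W2 = (\<lambda>t \<omega>. \<rho> * Wt1 t \<omega> + \<sigma> * Wt2 t \<omega>)" using assms(13) unfolding \<sigma>_def .
  have measW1[measurable]: "W1 x \<in> borel_measurable M" for x using BM1 unfolding W1e std_BM_def by auto
  have measWt2[measurable]: "Wt2 x \<in> borel_measurable M" for x using BM2 unfolding std_BM_def by auto
  have measW2[measurable]: "W2 x \<in> borel_measurable M" for x unfolding W2e using measW1 unfolding W1e by measurable
  have cov12: "\<And>x y. 0 \<le> x \<Longrightarrow> 0 \<le> y \<Longrightarrow> integrable M (\<lambda>\<omega>. W1 x \<omega> * W2 y \<omega>) \<and> (\<integral>\<omega>. W1 x \<omega> * W2 y \<omega> \<partial>M) = \<rho> * min x y"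
    unfolding W1e W2e using corr_cov(1,2)[OF BM1 BM2 ind] by blast
  have cov11: "\<And>x y. 0 \<le> x \<Longrightarrow> 0 \<le> y \<Longrightarrow> integrable M (\<lambda>\<omega>. W1 x \<omega> * W1 y \<omega>) \<and> (\<integral>\<omega>. W1 x \<omega> * W1 y \<omega> \<partial>M) = 1 * min x y"
    unfolding W1e using BM_cov[OF BM1] by simp
  have cov22: "\<And>x y. 0 \<le> x \<Longrightarrow> 0 \<le> y \<Longrightarrow> integrable M (\<lambda>\<omega>. W2 x \<omega> * W2 y \<omega>) \<and> (\<integral>\<omega>. W2 x \<omega> * W2 y \<omega> \<partial>M) = 1 * min x y"
    unfolding W2e using corr_cov(3,4)[OF BM1 BM2 ind, of _ _ \<rho> \<sigma>] \<sigma>2 by simp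
  have t: "t \<in> {0..T}" and s: "s \<in> {0..T}" using assms by auto
  have wi1: "wiener_integral M W1 T (KH H1 t) (B1 t)" using assms(14) t by auto
  then have mB1[measurable]: "B1 t \<in> borel_measurable M" unfolding wiener_integral_def by auto
  from wi1 obtain n1 c1 a1 b1 where
    ab1: "\<And>k i. 0 \<le> a1 k i \<and> a1 k i \<le> b1 k i \<and> b1 k i \<le> T" and
    cf1: "(\<lambda>k. \<integral>\<^sup>+ r\<in>{0..T}. ennreal ((KH H1 t r - step_fun (n1 k) (c1 k) (a1 k) (b1 k) r)\<^sup>2) \<partial>lborel) \<longlonglongrightarrow> 0" and
    cI1: "(\<lambda>k. \<integral>\<^sup>+ \<omega>. ennreal ((B1 t \<omega> - step_int W1 (n1 k) (c1 k) (a1 k) (b1 k) \<omega>)\<^sup>2) \<partial>M) \<longlonglongrightarrow> 0"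
    unfolding wiener_integral_def by blast
  have wi2: "wiener_integral M W2 T (KH H2 s) (B2 s)" using assms(15) s by auto
  then have mB2[measurable]: "B2 s \<in> borel_measurable M" unfolding wiener_integral_def by auto
  from wi2 obtain n2 c2 a2 b2 where
    ab2: "\<And>k i. 0 \<le> a2 k i \<and> a2 k i \<le> b2 k i \<and> b2 k i \<le> T" and
    cf2: "(\<lambda>k. \<integral>\<^sup>+ r\<in>{0..T}. ennreal ((KH H2 s r - step_fun (n2 k) (c2 k) (a2 k) (b2 k) r)\<^sup>2) \<partial>lborel) \<longlonglongrightarrow> 0" and
    cI2: "(\<lambda>k. \<integral>\<^sup>+ \<omega>. ennreal ((B2 s \<omega> - step_int W2 (n2 k) (c2 k) (a2 k) (b2 k) \<omega>)\<^sup>2) \<partial>M) \<longlonglongrightarrow> 0"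
    unfolding wiener_integral_def by blast
  define Xk where "Xk k = step_int W1 (n1 k) (c1 k) (a1 k) (b1 k)" for k
  define Yk where "Yk k = step_int W2 (n2 k) (c2 k) (a2 k) (b2 k)" for k
  define fk where "fk k = step_fun (n1 k) (c1 k) (a1 k) (b1 k)" for k
  define gk where "gk k = step_fun (n2 k) (c2 k) (a2 k) (b2 k)" for k
  have ab1': "\<And>k i. 0 \<le> a1 k i \<and> a1 k i \<le> b1 k i" and ab2': "\<And>k i. 0 \<le> a2 k i \<and> a2 k i \<le> b2 k i"
    using ab1 ab2 by auto
  have mXk[measurable]: "Xk k \<in> borel_measurable M" for k unfolding Xk_def step_int_def by measurable
  have mYk[measurable]: "Yk k \<in> borel_measurable M" for k unfolding Yk_def step_int_def by measurable
  have iXk: "integrable M (\<lambda>\<omega>. (Xk k \<omega>)\<^sup>2)" for k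
  proof -
    have "integrable M (\<lambda>\<omega>. Xk k \<omega> * Xk k \<omega>)" unfolding Xk_def
      by (rule step_cov(1)[where \<rho>=1]) (use cov11 ab1' in auto)
    then show ?thesis by (simp add: power2_eq_square)
  qed
  have iYk: "integrable M (\<lambda>\<omega>. (Yk k \<omega>)\<^sup>2)" for k
  proof -
    have "integrable M (\<lambda>\<omega>. Yk k \<omega> * Yk k \<omega>)" unfolding Yk_def
      by (rule step_cov(1)[where \<rho>=1]) (use cov22 ab2' in auto)
    then show ?thesis by (simp add: power2_eq_square)
  qed
  have EXY: "(\<integral>\<omega>. Xk k \<omega> * Yk k \<omega> \<partial>M) = \<rho> * (LINT r|lborel. fk k r * gk k r)" for k
    unfolding Xk_def Yk_def fk_def gk_def by (rule step_cov(2)) (use cov12 ab1' ab2' in auto)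
  have PL: "(\<lambda>k. \<integral>\<omega>. Xk k \<omega> * Yk k \<omega> \<partial>M) \<longlonglongrightarrow> (\<integral>\<omega>. B1 t \<omega> * B2 s \<omega> \<partial>M)"
    by (rule L2_limit(2)[OF mB1 mB2 mXk mYk iXk iYk]) (use cI1 cI2 in \<open>simp_all add: Xk_def Yk_def\<close>)
  have [measurable]: "(\<lambda>r. KH H1 t r) \<in> borel_measurable borel" "(\<lambda>r. KH H2 s r) \<in> borel_measurable borel"
    using KH_meas H by auto
  define X where "X r = KH H1 t r * indicator {0..T} r" for r
  define Y where "Y r = KH H2 s r * indicator {0..T} r" for r
  have mX[measurable]: "X \<in> borel_measurable lborel" unfolding X_def by measurable
  have mY[measurable]: "Y \<in> borel_measurable lborel" unfolding Y_def by measurable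
  have mfk[measurable]: "fk k \<in> borel_measurable lborel" for k unfolding fk_def step_fun_def by measurable
  have mgk[measurable]: "gk k \<in> borel_measurable lborel" for k unfolding gk_def step_fun_def by measurable
  have ifk: "integrable lborel (\<lambda>r. (fk k r)\<^sup>2)" for k
    using step_fun_prod_int[of "a1 k" "b1 k" "a1 k" "b1 k" "n1 k" "c1 k" "n1 k" "c1 k"] ab1 unfolding fk_def power2_eq_square by auto
  have igk: "integrable lborel (\<lambda>r. (gk k r)\<^sup>2)" for k
    using step_fun_prod_int[of "a2 k" "b2 k" "a2 k" "b2 k" "n2 k" "c2 k" "n2 k" "c2 k"] ab2 unfolding gk_def power2_eq_square by auto
  have fk0: "fk k r = 0" if "r \<notin> {0..T}" for k r
    unfolding fk_def step_fun_def
  proof (intro sum.neutral ballI)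
    fix i assume "i \<in> {..<n1 k}"
    have "r \<notin> {a1 k i<..b1 k i}" using that ab1[of k i] by auto
    then show "c1 k i * indicator {a1 k i<..b1 k i} r = 0" by simp
  qed
  have gk0: "gk k r = 0" if "r \<notin> {0..T}" for k r
    unfolding gk_def step_fun_def
  proof (intro sum.neutral ballI)
    fix i assume "i \<in> {..<n2 k}"
    have "r \<notin> {a2 k i<..b2 k i}" using that ab2[of k i] by auto
    then show "c2 k i * indicator {a2 k i<..b2 k i} r = 0" by simp
  qed
  have cX: "(\<lambda>k. \<integral>\<^sup>+ r. ennreal ((X r - fk k r)\<^sup>2) \<partial>lborel) \<longlonglongrightarrow> 0"
  proof -
    have "(\<integral>\<^sup>+ r\<in>{0..T}. ennreal ((KH H1 t r - fk k r)\<^sup>2) \<partial>lborel) = (\<integral>\<^sup>+ r. ennreal ((X r - fk k r)\<^sup>2) \<partial>lborel)" for k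
      by (rule nn_integral_cong) (auto simp: X_def indicator_def fk0)
    then show ?thesis using cf1 unfolding fk_def by simp
  qed
  have cY: "(\<lambda>k. \<integral>\<^sup>+ r. ennreal ((Y r - gk k r)\<^sup>2) \<partial>lborel) \<longlonglongrightarrow> 0"
  proof -
    have "(\<integral>\<^sup>+ r\<in>{0..T}. ennreal ((KH H2 s r - gk k r)\<^sup>2) \<partial>lborel) = (\<integral>\<^sup>+ r. ennreal ((Y r - gk k r)\<^sup>2) \<partial>lborel)" for k
      by (rule nn_integral_cong) (auto simp: Y_def indicator_def gk0)
    then show ?thesis using cf2 unfolding gk_def by simp
  qed
  note LL = L2_limit[OF mX mY mfk mgk ifk igk cX cY]
  have "(\<lambda>k. \<integral>\<omega>. Xk k \<omega> * Yk k \<omega> \<partial>M) \<longlonglongrightarrow> \<rho> * (LINT r|lborel. X r * Y r)"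
    unfolding EXY by (intro tendsto_mult_left LL(2))
  with PL have E: "(\<integral>\<omega>. B1 t \<omega> * B2 s \<omega> \<partial>M) = \<rho> * (LINT r|lborel. X r * Y r)"
    by (rule LIMSEQ_unique)
  have XY: "X r * Y r = KH H1 t r * KH H2 s r" for r
  proof (cases "r \<in> {0..T}")
    case False
    then have "r \<notin> {0<..<t}" using t by auto
    then have "KH H1 t r = 0" unfolding KH_def by simp
    then show ?thesis using False by (simp add: X_def Y_def)
  qed (simp add: X_def Y_def)
  have iKK: "integrable lborel (\<lambda>r. KH H1 t r * KH H2 s r)" using LL(1) unfolding XY .
  have KKnn: "KH H1 t r * KH H2 s r \<ge> 0" for r using KH_repr(2)[of H1 t r] KH_repr(2)[of H2 s r] H by simp
  have fin: "(\<integral>\<^sup>+ r. ennreal (KH H1 t r * KH H2 s r) \<partial>lborel) < \<infinity>"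
    using nn_integral_eq_integral[OF iKK] KKnn by simp
  have "(\<integral>\<omega>. B1 t \<omega> * B2 s \<omega> \<partial>M) = \<rho> * (cH H1 * cH H2 * (LBINT u:{0..t}. (LBINT v:{0..s}. Fb H1 H2 u v)))"
    using E rhs_conv[OF H fin] unfolding XY by simp
  then show ?thesis unfolding Fb_def by (simp add: mult_ac)
qed


end
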